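(* Let $H$ be a $3\times 3$ complex hermitian matrix with $\operatorname{tr}(H)=0$ and $\operatorname{tr}(H^2)=2$, let $I$ be the $3\times3$ identity, and let $s$ be real. Then $1+s^2+is^3\det(H)\neq 0$, $I-isH$ is invertible, and $$\int_0^\infty e^{-t}\exp(itsH)\,dt=(I-isH)^{-1}=\frac{1}{1+s^2+is^3\det(H)}\left((1+s^2)I+isH-s^2H^2\right),$$ and consequently $$(I+isH)(I-isH)^{-1}=\frac{1}{1+s^2+is^3\det(H)}\left(\left(1+s^2-is^3\det(H)\right)I+2isH-2s^2H^2\right).$$
   Context: The matrix exponential is the usual power series; the integral is taken entrywise. *)

theory Defs
  imports "HOL-Analysis.Analysis"
begin

definition cmat_scale :: "complex \<Rightarrow> complex^'n^'m \<Rightarrow> complex^'n^'m" where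
  "cmat_scale c A = (\<chi> i j. c * A $ i $ j)"

fun mat_pow :: "complex^'n^'n \<Rightarrow> nat \<Rightarrow> complex^'n^'n" where
  "mat_pow A 0 = mat 1"
| "mat_pow A (Suc k) = A ** mat_pow A k"

definition mat_exp :: "complex^'n^'n \<Rightarrow> complex^'n^'n" where
  "mat_exp A = (\<Sum>k. cmat_scale (1 / of_nat (fact k)) (mat_pow A k))"

definition hermitian :: "complex^'n^'n \<Rightarrow> bool" where
  "hermitian H \<longleftrightarrow> (\<forall>i j. H $ i $ j = cnj (H $ j $ i))"

end

theory Submission
  imports Defs "HOL-Real_Asymp.Real_Asymp"
begin

lemma all3: "(\<forall>i::3. P i) \<longleftrightarrow> P 1 \<and> P 2 \<and> P 3"
  by (metis exhaust_3)

lemma CH0: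
  fixes H :: "complex^3^3"
  assumes "trace H = 0"
  shows "2 * (H ** (H ** H)) $ i $ j = trace (H ** H) * H $ i $ j + 2 * det H * (mat 1 :: complex^3^3) $ i $ j"
proof -
  have "H$1$1 + H$2$2 + H$3$3 = 0" using assms(1) by (simp add: trace_def sum_3 algebra_simps)
  then have t1: "H$3$3 = - H$1$1 - H$2$2" by (simp add: algebra_simps eq_neg_iff_add_eq_0)
  show ?thesis
    using exhaust_3[of i] exhaust_3[of j]
    by (auto simp: matrix_matrix_mult_def sum_3 mat_def det_3 t1 trace_def algebra_simps)
qed

lemma CH:
  fixes H :: "complex^3^3"
  assumes "trace H = 0" "trace (H ** H) = 2"
  shows "H ** (H ** H) = H + mat (det H)"
  unfolding vec_eq_iff 
proof (intro allI)
  fix i j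
  have "2 * (H ** (H ** H)) $ i $ j = 2 * (H + mat (det H)) $ i $ j"
    using CH0[OF assms(1), of i j] assms(2) by (simp add: mat_def algebra_simps)
  then show "(H ** (H ** H)) $ i $ j = (H + mat (det H)) $ i $ j" by (metis mult_cancel_left zero_neq_numeral)
qed

lemma exp_int:
  fixes z :: complex assumes z: "Re z < 0"
  shows "((\<lambda>t::real. exp (of_real t * z)) has_integral (- 1 / z)) {0..}"
proof -
  define f where "f = (\<lambda>t::real. exp (of_real t * z))"
  define F where "F = (\<lambda>t::real. exp (of_real t * z) / z)"
  have z0: "z \<noteq> 0" using z by auto
  have ftc: "(f has_integral (F b - F 0)) {0..b}" if "b \<ge> 0" for b
  proof -
    have d: "((\<lambda>t. exp (complex_of_real t * z) / z) has_vector_derivative exp (complex_of_real x * z)) (at x within {0..b})" for x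
    proof -
      have "((\<lambda>w. exp (w * z) / z) has_field_derivative exp (of_real x * z)) (at (of_real x))"
        using z0 by (auto intro!: derivative_eq_intros)
      then show ?thesis by (rule has_vector_derivative_real_field)
    qed
    show ?thesis unfolding f_def F_def using fundamental_theorem_of_calculus[OF that d] .
  qed
  have cont: "continuous_on S f" for S unfolding f_def by (intro continuous_intros)
  define a where "a = - Re z"
  have a: "a > 0" using z a_def by simp
  have g: "((\<lambda>t. exp (-a*t)) has_integral exp (-a*0)/a) {0..}"
    by (rule has_integral_exp_minus_to_infinity[OF a])
  have nf: "norm (f t) = exp (-a*t)" for t unfolding f_def a_def by (simp add: norm_exp_eq_Re)
  have fi: "f integrable_on {0..}"
    by (rule measurable_bounded_by_integrable_imp_integrable[where g = "\<lambda>t. exp (-a*t)"])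
       (use g nf cont in \<open>auto intro: continuous_imp_measurable_on_sets_lebesgue\<close>)
  have fa: "set_integrable lebesgue {0..} f"
    by (rule absolutely_integrable_integrable_bound[where g = "\<lambda>t. exp (-a*t)"])
       (use g nf fi in auto)
  have lim1: "((\<lambda>b. set_lebesgue_integral lebesgue {0..b} f) \<longlongrightarrow> set_lebesgue_integral lebesgue {0..} f) at_top"
    by (rule tendsto_set_lebesgue_integral_at_top[OF _ fa]) auto
  have eq: "set_lebesgue_integral lebesgue {0..b} f = F b - F 0" if "b \<ge> 0" for b
  proof -
    have "set_integrable lebesgue {0..b} f"
      by (rule set_integrable_subset[OF fa]) auto
    then have "set_lebesgue_integral lebesgue {0..b} f = integral {0..b} f"
      by (rule set_lebesgue_integral_eq_integral)
    also have "\<dots> = F b - F 0" using ftc[OF that] by (rule integral_unique)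
    finally show ?thesis .
  qed
  have Flim: "(F \<longlongrightarrow> 0) at_top"
  proof -
    have "((\<lambda>b. exp (-a*b)) \<longlongrightarrow> 0) at_top" using a by real_asymp
    then have "((\<lambda>b. exp (-a*b) / cmod z) \<longlongrightarrow> 0) at_top" by (rule tendsto_divide_zero)
    moreover have "norm (F b) = exp (-a*b) / cmod z" for b
      unfolding F_def a_def by (simp add: norm_divide norm_exp_eq_Re)
    ultimately have "((\<lambda>b. norm (F b)) \<longlongrightarrow> 0) at_top" by simp
    then show ?thesis by (rule tendsto_norm_zero_cancel)
  qed
  have lim2: "((\<lambda>b. set_lebesgue_integral lebesgue {0..b} f) \<longlongrightarrow> 0 - F 0) at_top"
  proof -
    have "((\<lambda>b. F b - F 0) \<longlongrightarrow> 0 - F 0) at_top" by (intro tendsto_intros Flim)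
    moreover have "eventually (\<lambda>b. F b - F 0 = set_lebesgue_integral lebesgue {0..b} f) at_top"
      using eventually_ge_at_top[of "0::real"] by (rule eventually_mono) (simp add: eq)
    ultimately show ?thesis by (rule Lim_transform_eventually)
  qed
  have "set_lebesgue_integral lebesgue {0..} f = 0 - F 0"
    using tendsto_unique[OF trivial_limit_at_top_linorder lim1 lim2] .
  moreover have "set_lebesgue_integral lebesgue {0..} f = integral {0..} f"
    by (rule set_lebesgue_integral_eq_integral[OF fa])
  ultimately have "integral {0..} f = - 1 / z" unfolding F_def by simp
  then show ?thesis using fi unfolding f_def[symmetric] by (metis integrable_integral)
qed

lemma sc_nth[simp]: "cmat_scale c A $ i $ j = c * A $ i $ j"
  by (simp add: cmat_scale_def)

lemma sc_mult_left[simp]: "cmat_scale c A ** B = cmat_scale c (A ** B)"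
  by (simp add: vec_eq_iff matrix_matrix_mult_def sum_distrib_left mult.assoc)
lemma sc_mult_right[simp]: "A ** cmat_scale c B = cmat_scale c (A ** B)"
  by (simp add: vec_eq_iff matrix_matrix_mult_def sum_distrib_left algebra_simps)
lemma sc_add[simp]: "cmat_scale c (A + B) = cmat_scale c A + cmat_scale c B"
  by (simp add: vec_eq_iff algebra_simps)
lemma sc_diff[simp]: "cmat_scale c (A - B) = cmat_scale c A - cmat_scale c B"
  by (simp add: vec_eq_iff algebra_simps)
lemma sc_sc[simp]: "cmat_scale a (cmat_scale b A) = cmat_scale (a*b) A"
  by (simp add: vec_eq_iff algebra_simps)
lemma sc_1[simp]: "cmat_scale 1 A = A"
  by (simp add: vec_eq_iff)
lemma sc_0[simp]: "cmat_scale 0 A = 0" "cmat_scale c 0 = 0"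
  by (simp_all add: vec_eq_iff)
lemma matrix_add_rdistrib': "((A::complex^'n^'m) + B) ** C = A ** C + B ** C"
  by (simp add: vec_eq_iff matrix_matrix_mult_def algebra_simps sum.distrib)
lemma matrix_diff_rdistrib': "((A::complex^'n^'m) - B) ** C = A ** C - B ** C"
  by (simp add: vec_eq_iff matrix_matrix_mult_def algebra_simps sum_subtractf)
lemma matrix_diff_ldistrib': "(C::complex^'n^'m) ** (A - B) = C ** A - C ** B"
  by (simp add: vec_eq_iff matrix_matrix_mult_def algebra_simps sum_subtractf)

lemmas malg = matrix_add_ldistrib matrix_add_rdistrib' matrix_diff_rdistrib' matrix_diff_ldistrib'
  matrix_mul_assoc[symmetric]

definition PH :: "complex^3^3 \<Rightarrow> complex \<Rightarrow> complex \<Rightarrow> complex \<Rightarrow> complex^3^3" where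
  "PH H a b c = cmat_scale a (mat 1) + cmat_scale b H + cmat_scale c (H ** H)"

lemma PH_mult:
  assumes CH: "H ** (H ** H) = H + cmat_scale d (mat 1)"
  shows "PH H a b c ** PH H a' b' c' =
     PH H (a*a' + d*(b*c'+c*b')) (a*b'+b*a'+b*c'+c*b'+d*c*c') (a*c'+b*b'+c*a'+c*c')"
  unfolding PH_def
  by (simp add: malg CH vec_eq_iff algebra_simps)

lemma inv_unique:
  fixes M :: "complex^3^3"
  assumes "M ** X = mat 1"
  shows "invertible M \<and> matrix_inv M = X"
proof -
  have XM: "X ** M = mat 1" using assms matrix_left_right_inverse by blast
  then have inv: "invertible M" using assms unfolding invertible_def by blast
  have "M ** matrix_inv M = mat 1 \<and> matrix_inv M ** M = mat 1"
    unfolding matrix_inv_def by (rule someI[of _ X]) (use assms XM in simp)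
  then have "matrix_inv M = matrix_inv M ** (M ** X)" using assms by simp
  also have "\<dots> = X" using \<open>_ \<and> _\<close> by (simp add: matrix_mul_assoc)
  finally show ?thesis using inv by simp
qed

definition cadj :: "complex^'n^'m \<Rightarrow> complex^'m^'n" where
  "cadj Z = (\<chi> i j. cnj (Z $ j $ i))"

lemma cadj_nth[simp]: "cadj Z $ i $ j = cnj (Z $ j $ i)" by (simp add: cadj_def)

lemma cadj_mult: "cadj ((A::complex^'n^'m) ** B) = cadj B ** cadj A"
  by (simp add: vec_eq_iff matrix_matrix_mult_def mult.commute)

lemma cadj_diag: "(cadj Z ** Z) $ i $ i = complex_of_real (\<Sum>k\<in>UNIV. (cmod (Z $ k $ i))^2)"
proof -
  have e: "cnj z * z = complex_of_real ((cmod z)^2)" for z :: complex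
    using complex_norm_square[of z] by (simp add: mult.commute)
  show ?thesis unfolding matrix_matrix_mult_def of_real_sum
    by (simp only: cadj_nth vec_lambda_beta e)
qed

lemma cadj_zero:
  fixes Z :: "complex^'n^'m"
  assumes "\<And>i. (\<Sum>k\<in>UNIV. (cmod (Z $ k $ i))^2) = 0"
  shows "Z = 0"
proof -
  have "cmod (Z $ k $ i) ^ 2 = 0" for k i
    using assms[of i] by (subst (asm) sum_nonneg_eq_0_iff) auto
  then show ?thesis by (simp add: vec_eq_iff)
qed

lemma herm_cadj: "hermitian H \<Longrightarrow> cadj H = H"
  unfolding hermitian_def vec_eq_iff cadj_nth by metis

lemma herm_sq_zero:
  fixes N :: "complex^'n^'n"
  assumes "cadj N = N" "N ** N = 0"
  shows "N = 0"
proof (rule cadj_zero)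
  fix i
  have "(cadj N ** N) $ i $ i = 0" using assms by simp
  then show "(\<Sum>k\<in>UNIV. (cmod (N $ k $ i))^2) = 0" by (simp only: cadj_diag of_real_eq_0_iff)
qed

lemma aux_real: "(A::real) + c * B = 0 \<Longrightarrow> A \<ge> 0 \<Longrightarrow> B \<ge> 0 \<Longrightarrow> c > 0 \<Longrightarrow> B = 0"
proof -
  assume h: "A + c * B = 0" "A \<ge> 0" "B \<ge> 0" "c > 0"
  then have "c * B \<ge> 0" by simp
  then have "c * B = 0" using h by linarith
  then show "B = 0" using h by simp
qed

lemma herm_pos:
  fixes K L :: "complex^'n^'n"
  assumes K: "cadj K = K" and L: "cadj L = L" and c: "c > 0"
    and Z: "K ** (L ** L + cmat_scale (of_real c) (mat 1)) = 0"
  shows "K = 0"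
proof (rule cadj_zero)
  fix i
  have "(K ** (L ** L + cmat_scale (of_real c) (mat 1))) ** K = 0" by (simp only: Z times0_left)
  then have "K ** (L ** (L ** K)) + cmat_scale (of_real c) (K ** K) = 0"
    by (simp only: malg sc_mult_left sc_mult_right matrix_mul_lid matrix_mul_rid)
  moreover have "cadj (L ** K) ** (L ** K) = K ** (L ** (L ** K))"
    by (simp only: cadj_mult K L) (simp only: matrix_mul_assoc)
  ultimately have "cadj (L ** K) ** (L ** K) + cmat_scale (of_real c) (cadj K ** K) = 0"
    by (simp only: K)
  then have "(cadj (L ** K) ** (L ** K) + cmat_scale (of_real c) (cadj K ** K)) $ i $ i = 0"
    by (simp only: zero_index)
  then have "(cadj (L ** K) ** (L ** K)) $ i $ i + of_real c * (cadj K ** K) $ i $ i = 0"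
    by (simp only: vector_add_component sc_nth)
  then have e: "(\<Sum>k\<in>UNIV. (cmod ((L ** K) $ k $ i))^2) + c * (\<Sum>k\<in>UNIV. (cmod (K $ k $ i))^2) = 0"
    unfolding cadj_diag of_real_mult[symmetric] of_real_add[symmetric] of_real_eq_0_iff .
  moreover have n: "(\<Sum>k\<in>UNIV. (cmod ((L ** K) $ k $ i))^2) \<ge> 0" "(\<Sum>k\<in>UNIV. (cmod (K $ k $ i))^2) \<ge> 0"
    by (simp_all add: sum_nonneg)
  ultimately show "(\<Sum>k\<in>UNIV. (cmod (K $ k $ i))^2) = 0"
    using aux_real[OF e n c] by blast
qed

lemma cadj_add: "cadj (A + B) = cadj A + cadj B" by (simp add: vec_eq_iff)
lemma cadj_sc: "cadj (cmat_scale c A) = cmat_scale (cnj c) (cadj A)" by (simp add: vec_eq_iff)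
lemma cadj_mat1: "cadj (mat 1 :: complex^'n^'n) = mat 1" by (simp add: vec_eq_iff mat_def)

lemma cadj_PH:
  assumes "hermitian H"
  shows "cadj (PH H (of_real a) (of_real b) (of_real c)) = PH H (of_real a) (of_real b) (of_real c)"
  unfolding PH_def by (simp only: cadj_add cadj_sc cadj_mat1 cadj_mult herm_cadj[OF assms] complex_cnj_complex_of_real)

lemma PH_zero: "PH H 0 0 0 = 0" unfolding PH_def by simp
lemma PH_add: "PH H a b c + PH H a' b' c' = PH H (a+a') (b+b') (c+c')"
  unfolding PH_def by (simp add: vec_eq_iff algebra_simps)
lemma PH_sc: "cmat_scale x (PH H a b c) = PH H (x*a) (x*b) (x*c)"
  unfolding PH_def by (simp add: vec_eq_iff algebra_simps)
lemma PH_H: "H = PH H 0 1 0" unfolding PH_def by (simp add: vec_eq_iff)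
lemma PH_I: "mat 1 = PH H 1 0 0" unfolding PH_def by (simp add: vec_eq_iff)

lemma det_real:
  fixes H :: "complex^3^3"
  assumes "hermitian H"
  shows "cnj (det H) = det H"
proof -
  have h: "cnj (H $ i $ j) = H $ j $ i" for i j
  proof -
    have "H $ j $ i = cnj (H $ i $ j)" using assms unfolding hermitian_def by blast
    then show ?thesis by simp
  qed
  show ?thesis unfolding det_3 complex_cnj_diff complex_cnj_add complex_cnj_mult h
    by (simp add: algebra_simps)
qed

lemma PH_eq0: "a = 0 \<Longrightarrow> b = 0 \<Longrightarrow> c = 0 \<Longrightarrow> PH H a b c = 0"
  by (simp add: PH_zero)

lemma nil_coeffs:
  fixes A :: complex assumes a2: "3*(A*A) = 1"
  shows "A * (- 2 * A) * (A * (- 2 * A)) + A * A * (- 2 * A) * (- (A + - 2 * A) * 1 + 1 * - (A + - 2 * A)) = 0"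
    "A * (- 2 * A) * - (A + - 2 * A) + - (A + - 2 * A) * (A * (- 2 * A)) + - (A + - 2 * A) * 1 + 1 * - (A + - 2 * A) + A * A * (- 2 * A) * 1 * 1 = 0"
    "A * (- 2 * A) * 1 + - (A + - 2 * A) * - (A + - 2 * A) + 1 * (A * (- 2 * A)) + 1 * 1 = 0"
  subgoal by algebra
  subgoal using a2 by algebra
  subgoal using a2 by algebra
  done

lemma NIL:
  fixes H :: "complex^3^3" and a b :: real
  assumes herm: "hermitian H" and CH: "H ** (H ** H) = H + cmat_scale d (mat 1)"
    and r1: "2*a+b = 0" and r2: "a^2+2*a*b = -1" and r3: "of_real (a^2*b) = d"
  shows "PH H (of_real (a*b)) (of_real (-(a+b))) 1 = 0"
proof -
  let ?N = "PH H (of_real (a*b)) (of_real (-(a+b))) 1"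
  define A where "A = complex_of_real a"
  have b': "b = -2*a" using r1 by linarith
  have b: "complex_of_real b = -2*A" unfolding A_def b' by simp
  have "3*(a*a) = 1" using r2 unfolding b' power2_eq_square by (simp add: algebra_simps)
  then have "complex_of_real (3*(a*a)) = 1" by simp
  then have a2: "3*(A*A) = 1" unfolding A_def by simp
  have d: "d = A*A*(-2*A)" using r3 unfolding A_def b' power2_eq_square by simp
  have "?N ** ?N = 0"
    unfolding PH_mult[OF CH] of_real_mult of_real_minus of_real_add
    unfolding A_def[symmetric] b d
    by (rule PH_eq0; rule nil_coeffs[OF a2])
  moreover have "cadj ?N = ?N" using cadj_PH[OF herm, of "a*b" "-(a+b)" 1] by (simp only: of_real_1)
  ultimately show ?thesis using herm_sq_zero by blast
qed

lemma NEG: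
  fixes H :: "complex^3^3" and r :: real
  assumes herm: "hermitian H" and CH: "H ** (H ** H) = H + cmat_scale d (mat 1)"
    and tr: "trace H = 0"
    and rd: "of_real (r^3 - r) = d" and disc: "3*r^2 > 4"
  shows False
proof -
  define c where "c = 3*r^2/4 - 1"
  have c: "c > 0" using disc by (simp add: c_def)
  let ?K = "PH H (of_real (-r)) 1 0" and ?L = "PH H (of_real (r/2)) 1 0"
  have "?K ** (?L ** ?L + cmat_scale (of_real c) (mat 1)) = PH H 0 0 0"
    unfolding PH_mult[OF CH] PH_I[of H] PH_sc PH_add PH_mult[OF CH] rd[symmetric] c_def
    by (simp add: algebra_simps power2_eq_square power3_eq_cube)
  then have "?K ** (?L ** ?L + cmat_scale (of_real c) (mat 1)) = 0" by (simp add: PH_zero)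
  moreover have "cadj ?K = ?K" using cadj_PH[OF herm, of "-r" 1 0] by simp
  moreover have "cadj ?L = ?L" using cadj_PH[OF herm, of "r/2" 1 0] by simp
  ultimately have "?K = 0" using herm_pos c by blast
  then have "H = cmat_scale (of_real r) (mat 1)"
    unfolding PH_def by (simp add: vec_eq_iff algebra_simps)
  then have "trace H = 3 * of_real r" by (simp add: trace_def sum_3 mat_def)
  then have "r = 0" using tr by simp
  then show False using disc by simp
qed

lemma EIG:
  fixes H :: "complex^3^3"
  assumes cub: "H ** (H ** H) = cmat_scale (l+a+b) (H ** H) - cmat_scale (l*a+l*b+a*b) H + cmat_scale (l*a*b) (mat 1)"
  shows "H ** cmat_scale c ((H - cmat_scale a (mat 1)) ** (H - cmat_scale b (mat 1)))
       = cmat_scale l (cmat_scale c ((H - cmat_scale a (mat 1)) ** (H - cmat_scale b (mat 1))))"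
  by (simp add: malg cub vec_eq_iff algebra_simps)

lemma lagrange_sum:
  fixes H :: "complex^3^3"
  assumes d: "l1 \<noteq> l2" "l1 \<noteq> l3" "l2 \<noteq> l3"
  shows "cmat_scale (1/((l1-l2)*(l1-l3))) ((H - cmat_scale l2 (mat 1)) ** (H - cmat_scale l3 (mat 1)))
       + cmat_scale (1/((l2-l1)*(l2-l3))) ((H - cmat_scale l1 (mat 1)) ** (H - cmat_scale l3 (mat 1)))
       + cmat_scale (1/((l3-l1)*(l3-l2))) ((H - cmat_scale l1 (mat 1)) ** (H - cmat_scale l2 (mat 1)))
       = mat 1"
proof -
  define c1 where "c1 = 1/((l1-l2)*(l1-l3))"
  define c2 where "c2 = 1/((l2-l1)*(l2-l3))"
  define c3 where "c3 = 1/((l3-l1)*(l3-l2))"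
  have n: "l1-l2 \<noteq> 0" "l1-l3\<noteq>0" "l2-l1\<noteq>0" "l2-l3\<noteq>0" "l3-l1\<noteq>0" "l3-l2\<noteq>0" using d by auto
  have e1: "c1 + c2 + c3 = 0" unfolding c1_def c2_def c3_def
    by (simp add: n divide_simps) (use d in \<open>simp add: algebra_simps\<close>)
  have e2: "c1*(l2+l3) + c2*(l1+l3) + c3*(l1+l2) = 0" unfolding c1_def c2_def c3_def
    by (simp add: n divide_simps) (use d in \<open>simp add: algebra_simps\<close>)
  have e3: "c1*(l2*l3) + c2*(l1*l3) + c3*(l1*l2) = 1" unfolding c1_def c2_def c3_def
    by (simp add: n divide_simps) (use d in \<open>simp add: algebra_simps\<close>)
  have "cmat_scale c1 ((H - cmat_scale l2 (mat 1)) ** (H - cmat_scale l3 (mat 1)))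
       + cmat_scale c2 ((H - cmat_scale l1 (mat 1)) ** (H - cmat_scale l3 (mat 1)))
       + cmat_scale c3 ((H - cmat_scale l1 (mat 1)) ** (H - cmat_scale l2 (mat 1)))
     = cmat_scale (c1 + c2 + c3) (H ** H) - cmat_scale (c1*(l2+l3) + c2*(l1+l3) + c3*(l1+l2)) H
       + cmat_scale (c1*(l2*l3) + c2*(l1*l3) + c3*(l1*l2)) (mat 1)"
    by (simp add: malg vec_eq_iff algebra_simps)
  then show ?thesis unfolding e1 e2 e3 c1_def[symmetric] c2_def[symmetric] c3_def[symmetric] by simp
qed

lemma sums_mat:
  fixes f :: "nat \<Rightarrow> complex^'n^'m"
  assumes "\<And>i j. (\<lambda>n. f n $ i $ j) sums (S $ i $ j)"
  shows "f sums S"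
  unfolding sums_def
proof (rule vec_tendstoI)
  fix i
  show "((\<lambda>N. (\<Sum>n<N. f n) $ i) \<longlongrightarrow> S $ i) sequentially"
  proof (rule vec_tendstoI)
    fix j
    show "((\<lambda>N. (\<Sum>n<N. f n) $ i $ j) \<longlongrightarrow> S $ i $ j) sequentially"
      using assms[of i j] unfolding sums_def by (simp add: sum_component)
  qed
qed

lemma exp_sums: "(\<lambda>n. 1 / of_nat (fact n) * x ^ n) sums exp (x::complex)"
proof -
  have "(\<lambda>n. x ^ n /\<^sub>R fact n) sums exp x" by (rule exp_converges)
  moreover have "x ^ n /\<^sub>R fact n = 1 / of_nat (fact n) * x ^ n" for n
    by (simp add: scaleR_conv_of_real divide_simps)
  ultimately show ?thesis by simp
qed

lemma CORE:
  fixes H :: "complex^3^3" and l1 l2 l3 :: complex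
  assumes d: "l1 \<noteq> l2" "l1 \<noteq> l3" "l2 \<noteq> l3"
    and cub: "H ** (H ** H) = cmat_scale (l1+l2+l3) (H ** H) - cmat_scale (l1*l2+l1*l3+l2*l3) H + cmat_scale (l1*l2*l3) (mat 1)"
  shows "\<exists>P1 P2 P3. P1 + P2 + P3 = mat 1 \<and> H ** P1 = cmat_scale l1 P1 \<and> H ** P2 = cmat_scale l2 P2
     \<and> H ** P3 = cmat_scale l3 P3
     \<and> (\<forall>z. mat_exp (cmat_scale z H) = cmat_scale (exp (z*l1)) P1 + cmat_scale (exp (z*l2)) P2 + cmat_scale (exp (z*l3)) P3)"
proof -
  define P1 where "P1 = cmat_scale (1/((l1-l2)*(l1-l3))) ((H - cmat_scale l2 (mat 1)) ** (H - cmat_scale l3 (mat 1)))"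
  define P2 where "P2 = cmat_scale (1/((l2-l1)*(l2-l3))) ((H - cmat_scale l1 (mat 1)) ** (H - cmat_scale l3 (mat 1)))"
  define P3 where "P3 = cmat_scale (1/((l3-l1)*(l3-l2))) ((H - cmat_scale l1 (mat 1)) ** (H - cmat_scale l2 (mat 1)))"
  have S: "P1 + P2 + P3 = mat 1" unfolding P1_def P2_def P3_def by (rule lagrange_sum[OF d])
  have E1: "H ** P1 = cmat_scale l1 P1" unfolding P1_def by (rule EIG) (use cub in \<open>simp add: algebra_simps\<close>)
  have E2: "H ** P2 = cmat_scale l2 P2" unfolding P2_def by (rule EIG) (use cub in \<open>simp add: algebra_simps\<close>)
  have E3: "H ** P3 = cmat_scale l3 P3" unfolding P3_def by (rule EIG) (use cub in \<open>simp add: algebra_simps\<close>)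
  have pow: "mat_pow (cmat_scale z H) n = cmat_scale ((z*l1)^n) P1 + cmat_scale ((z*l2)^n) P2 + cmat_scale ((z*l3)^n) P3" for z n
  proof (induction n)
    case 0 then show ?case using S by simp
  next
    case (Suc n)
    show ?case by (simp add: Suc malg E1 E2 E3 vec_eq_iff algebra_simps)
  qed
  have ex: "mat_exp (cmat_scale z H) = cmat_scale (exp (z*l1)) P1 + cmat_scale (exp (z*l2)) P2 + cmat_scale (exp (z*l3)) P3" for z
  proof -
    have "(\<lambda>k. cmat_scale (1 / of_nat (fact k)) (mat_pow (cmat_scale z H) k)) sums
           (cmat_scale (exp (z*l1)) P1 + cmat_scale (exp (z*l2)) P2 + cmat_scale (exp (z*l3)) P3)"
    proof (rule sums_mat)
      fix i j
      have "(\<lambda>n. 1 / of_nat (fact n) * (z*l1) ^ n * P1 $ i $ j + 1 / of_nat (fact n) * (z*l2) ^ n * P2 $ i $ j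
               + 1 / of_nat (fact n) * (z*l3) ^ n * P3 $ i $ j) sums
            (exp (z*l1) * P1 $ i $ j + exp (z*l2) * P2 $ i $ j + exp (z*l3) * P3 $ i $ j)"
        by (intro sums_add sums_mult2 exp_sums)
      then show "(\<lambda>n. cmat_scale (1 / of_nat (fact n)) (mat_pow (cmat_scale z H) n) $ i $ j) sums
            (cmat_scale (exp (z*l1)) P1 + cmat_scale (exp (z*l2)) P2 + cmat_scale (exp (z*l3)) P3) $ i $ j"
        unfolding pow by (simp add: algebra_simps)
    qed
    then show ?thesis unfolding mat_exp_def by (rule sums_unique[symmetric])
  qed
  show ?thesis using S E1 E2 E3 ex by blast
qed

lemma real_root: "\<exists>r::real. r^3 - r = \<delta>"
proof -
  define R where "R = \<bar>\<delta>\<bar> + 2"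
  have R: "R \<ge> 2" "R \<ge> \<bar>\<delta>\<bar>" unfolding R_def by auto
  have "R^3 - R \<ge> R" proof -
    have "R*R \<ge> 2*2" using R by (intro mult_mono) auto
    then have "R*(R*R) \<ge> R*2" using R by (intro mult_left_mono) auto
    then show ?thesis by (simp add: power3_eq_cube algebra_simps)
  qed
  then have "(\<lambda>x. x^3 - x) (-R) \<le> \<delta>" "\<delta> \<le> (\<lambda>x. x^3 - x) R" using R by auto
  moreover have "continuous_on {-R..R} (\<lambda>x::real. x^3 - x)" by (intro continuous_intros)
  ultimately show ?thesis using IVT'[of "\<lambda>x. x^3 - x" "-R" \<delta> R] R by auto
qed

lemma ROOTS:
  fixes r \<delta> :: real
  assumes rd: "r^3 - r = \<delta>" and disc: "3*r^2 \<le> 4"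
  shows "(\<exists>l1 l2 l3. l1\<noteq>l2 \<and> l1\<noteq>l3 \<and> l2\<noteq>l3 \<and> l1+l2+l3 = 0 \<and> l1*l2+l1*l3+l2*l3 = -1 \<and> l1*l2*l3 = \<delta>)
       \<or> (\<exists>a b. a\<noteq>b \<and> 2*a+b = 0 \<and> a^2+2*a*b = -1 \<and> a^2*b = \<delta>)"
proof -
  define q where "q = sqrt (4 - 3*r^2)"
  have h: "0 \<le> 4 - 3*r^2" using disc by linarith
  have q2: "q*q = 4 - 3*r^2" unfolding q_def by (metis h power2_eq_square real_sqrt_pow2)
  have q0: "q \<ge> 0" unfolding q_def using h by simp
  define l2 where "l2 = (-r+q)/2"
  define l3 where "l3 = (-r-q)/2"
  have s: "r + l2 + l3 = 0" unfolding l2_def l3_def by (simp add: field_simps)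
  have p0: "l2*l3 = (r*r - q*q)/4" unfolding l2_def l3_def by (simp add: algebra_simps divide_simps)
  have p: "l2*l3 = r^2 - 1" unfolding p0 q2 by (simp add: power2_eq_square field_simps)
  have l23: "l2 + l3 = -r" using s by linarith
  have "r*l2 + r*l3 + l2*l3 = r*(l2+l3) + l2*l3" by (simp add: algebra_simps)
  also have "\<dots> = -1" unfolding l23 p by (simp add: power2_eq_square)
  finally have e2: "r*l2 + r*l3 + l2*l3 = -1" .
  have "r*l2*l3 = r*(l2*l3)" by (simp add: algebra_simps)
  also have "\<dots> = \<delta>" unfolding p rd[symmetric] by (simp add: power2_eq_square power3_eq_cube algebra_simps)
  finally have e3: "r*l2*l3 = \<delta>" .
  show ?thesis
  proof (cases "q = 0")
    case True
    then have r2: "3*(r*r) = 4" using q2 by (simp add: power2_eq_square)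
    then have "r \<noteq> 0" by auto
    moreover have "(-r/2)^2 + 2*(-r/2)*r = -1" using r2 by (simp add: power2_eq_square algebra_simps)
    moreover have "(-r/2)^2*r = \<delta>"
    proof -
      have rr: "r*r = 4/3" using r2 by simp
      have "(-r/2)^2*r = (r*r)*r/4" by (simp add: power2_eq_square)
      also have "\<dots> = r/3" unfolding rr by simp
      also have "\<dots> = (r*r)*r - r" unfolding rr by simp
      also have "\<dots> = \<delta>" unfolding rd[symmetric] by (simp add: power3_eq_cube)
      finally show ?thesis .
    qed
    ultimately have "-r/2 \<noteq> r \<and> 2*(-r/2) + r = 0 \<and> (-r/2)^2 + 2*(-r/2)*r = -1 \<and> (-r/2)^2*r = \<delta>" by auto
    then show ?thesis by blast
  next
    case False
    then have d23: "l2 \<noteq> l3" unfolding l2_def l3_def by simp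
    show ?thesis
    proof (cases "r = l2")
      case True
      have "r \<noteq> l3" using d23 True by simp
      moreover have "2*r + l3 = 0" using s True by linarith
      moreover have "r^2 + 2*r*l3 = -1" using e2 True by (simp add: power2_eq_square)
      moreover have "r^2*l3 = \<delta>" using e3 True by (simp add: power2_eq_square)
      ultimately show ?thesis by blast
    next
      case n2: False
      show ?thesis
      proof (cases "r = l3")
        case True
        have "r \<noteq> l2" using d23 True by simp
        moreover have "2*r + l2 = 0" using s True by linarith
        moreover have "r^2 + 2*r*l2 = -1" using e2 True by (simp add: power2_eq_square algebra_simps)
        moreover have "r^2*l2 = \<delta>" using e3 True by (simp add: power2_eq_square algebra_simps)
        ultimately show ?thesis by blast
      next
        case False
        show ?thesis using d23 n2 False s e2 e3 by blast
      qed
    qed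
  qed
qed

lemma QUAD:
  fixes H :: "complex^3^3" and A B C :: complex
  assumes "PH H (A*B) (-(A+B)) 1 = 0"
  shows "H ** (H ** H) = cmat_scale (A+B+C) (H ** H) - cmat_scale (A*B+A*C+B*C) H + cmat_scale (A*B*C) (mat 1)"
proof -
  have "H ** H = H ** H - PH H (A*B) (-(A+B)) 1" using assms by simp
  also have "\<dots> = cmat_scale (A+B) H - cmat_scale (A*B) (mat 1)"
    by (simp add: PH_def vec_eq_iff algebra_simps)
  finally have Q: "H ** H = cmat_scale (A+B) H - cmat_scale (A*B) (mat 1)" .
  show ?thesis by (simp add: malg Q vec_eq_iff algebra_simps)
qed

lemma PH_cong: "a = a' \<Longrightarrow> b = b' \<Longrightarrow> c = c' \<Longrightarrow> PH H a b c = PH H a' b' c'" by simp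

lemma exp_shift: "exp (complex_of_real t * (-1 + w)) = complex_of_real (exp (-t)) * exp (complex_of_real t * w)"
proof -
  have "complex_of_real (exp (-t)) * exp (complex_of_real t * w) = exp (complex_of_real (-t)) * exp (complex_of_real t * w)"
    by (simp only: exp_of_real)
  also have "\<dots> = exp (complex_of_real (-t) + complex_of_real t * w)" by (rule exp_add[symmetric])
  also have "\<dots> = exp (complex_of_real t * (-1 + w))" by (simp add: algebra_simps)
  finally show ?thesis by simp
qed

theorem mainTheorem2:
  fixes H :: "complex^3^3" and s :: real
  assumes "hermitian H"
    and "trace H = 0"
    and "trace (H ** H) = 2"
  shows "1 + complex_of_real (s^2) + \<i> * complex_of_real (s^3) * det H \<noteq> 0
    \<and> invertible (mat 1 - cmat_scale (\<i> * complex_of_real s) H)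
    \<and> (\<forall>i j. ((\<lambda>t. complex_of_real (exp (- t))
              * mat_exp (cmat_scale (\<i> * complex_of_real (t * s)) H) $ i $ j)
           has_integral (matrix_inv (mat 1 - cmat_scale (\<i> * complex_of_real s) H)) $ i $ j) {0..})
    \<and> matrix_inv (mat 1 - cmat_scale (\<i> * complex_of_real s) H)
        = cmat_scale (1 / (1 + complex_of_real (s^2) + \<i> * complex_of_real (s^3) * det H))
            (cmat_scale (1 + complex_of_real (s^2)) (mat 1)
             + cmat_scale (\<i> * complex_of_real s) H
             - cmat_scale (complex_of_real (s^2)) (H ** H))
    \<and> (mat 1 + cmat_scale (\<i> * complex_of_real s) H)
        ** matrix_inv (mat 1 - cmat_scale (\<i> * complex_of_real s) H)
        = cmat_scale (1 / (1 + complex_of_real (s^2) + \<i> * complex_of_real (s^3) * det H))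
            (cmat_scale (1 + complex_of_real (s^2) - \<i> * complex_of_real (s^3) * det H) (mat 1)
             + cmat_scale (2 * \<i> * complex_of_real s) H
             - cmat_scale (2 * complex_of_real (s^2)) (H ** H))"
proof -
  note herm = assms(1)
  let ?y = "\<i> * complex_of_real s"
  define D where "D = 1 + complex_of_real (s^2) + \<i> * complex_of_real (s^3) * det H"
  have "cnj (det H) = det H" by (rule det_real[OF herm])
  then have "Im (det H) = 0" by (simp add: complex_eq_iff)
  then obtain \<delta> where d\<delta>: "det H = complex_of_real \<delta>" by (metis complex_is_Real_iff Reals_cases)
  have CH': "H ** (H ** H) = H + cmat_scale (det H) (mat 1)"
    using CH[OF assms(2,3)] by (simp add: vec_eq_iff mat_def)
  have "Re D = 1 + s^2" unfolding D_def d\<delta> by simp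
  then have D0: "D \<noteq> 0" by (metis add_pos_nonneg zero_less_one zero_le_power2 less_irrefl zero_complex.sel(1))
  define M where "M = mat 1 - cmat_scale ?y H"
  define X where "X = cmat_scale (1 / D) (cmat_scale (1 + complex_of_real (s^2)) (mat 1)
             + cmat_scale (\<i> * complex_of_real s) H - cmat_scale (complex_of_real (s^2)) (H ** H))"
  have MPH: "M = PH H 1 (-?y) 0" unfolding M_def PH_def by (simp add: vec_eq_iff)
  define u where "u = 1/D"
  have uD: "u * D = 1" unfolding u_def using D0 by simp
  have XPH: "X = PH H (u*(1 + complex_of_real (s^2))) (u*?y) (-(u*complex_of_real (s^2)))"
    unfolding X_def PH_def u_def by (simp add: vec_eq_iff algebra_simps)
  have MX: "M ** X = mat 1"
    unfolding MPH XPH PH_mult[OF CH'] PH_I[of H]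
    apply (rule PH_cong)
    subgoal
      apply (rule trans[of _ "u*D"])
      subgoal unfolding D_def by (simp add: algebra_simps power2_eq_square power3_eq_cube)
      subgoal using uD by simp
      done
    subgoal by (simp add: algebra_simps power2_eq_square)
    subgoal by (simp add: algebra_simps power2_eq_square)
    done
  have invM: "invertible M" and MinvX: "matrix_inv M = X" using inv_unique[OF MX] by auto
  have last: "(mat 1 + cmat_scale ?y H) ** X
        = cmat_scale (1 / D)
            (cmat_scale (1 + complex_of_real (s^2) - \<i> * complex_of_real (s^3) * det H) (mat 1)
             + cmat_scale (2 * \<i> * complex_of_real s) H
             - cmat_scale (2 * complex_of_real (s^2)) (H ** H))"
  proof -
    have LPH: "mat 1 + cmat_scale ?y H = PH H 1 ?y 0" unfolding PH_def by (simp add: vec_eq_iff)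
    have RPH: "cmat_scale (1 / D)
            (cmat_scale (1 + complex_of_real (s^2) - \<i> * complex_of_real (s^3) * det H) (mat 1)
             + cmat_scale (2 * \<i> * complex_of_real s) H
             - cmat_scale (2 * complex_of_real (s^2)) (H ** H))
       = PH H (u*(1 + complex_of_real (s^2) - \<i> * complex_of_real (s^3) * det H)) (u*(2 * \<i> * complex_of_real s))
             (-(u*(2 * complex_of_real (s^2))))"
      unfolding u_def PH_def by (simp add: vec_eq_iff algebra_simps)
    show ?thesis unfolding LPH XPH RPH PH_mult[OF CH']
      by (rule PH_cong; simp add: algebra_simps power2_eq_square power3_eq_cube)
  qed
  obtain r where rd: "r^3 - r = \<delta>" using real_root by blast
  have rd': "complex_of_real (r^3 - r) = det H" by (simp add: rd d\<delta>)
  have disc: "3*r^2 \<le> 4"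
  proof (rule ccontr)
    assume "\<not> 3*r^2 \<le> 4"
    then have "3*r^2 > 4" by simp
    then show False using NEG[OF herm CH' assms(2) rd'] by blast
  qed
  have "\<exists>l1 l2 l3::real. l1\<noteq>l2 \<and> l1\<noteq>l3 \<and> l2\<noteq>l3 \<and>
     H ** (H ** H) = cmat_scale (of_real l1 + of_real l2 + of_real l3) (H ** H)
       - cmat_scale (of_real l1 * of_real l2 + of_real l1 * of_real l3 + of_real l2 * of_real l3) H
       + cmat_scale (of_real l1 * of_real l2 * of_real l3) (mat 1)"
    using ROOTS[OF rd disc]
  proof (elim disjE exE conjE)
    fix l1 l2 l3 :: real
    assume d: "l1\<noteq>l2" "l1\<noteq>l3" "l2\<noteq>l3" and e1: "l1+l2+l3 = 0" and e2: "l1*l2+l1*l3+l2*l3 = -1"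
      and e3: "l1*l2*l3 = \<delta>"
    have c1: "complex_of_real l1 + of_real l2 + of_real l3 = 0"
      by (metis e1 of_real_add of_real_0)
    have c2: "complex_of_real l1 * of_real l2 + of_real l1 * of_real l3 + of_real l2 * of_real l3 = -1"
      by (metis e2 of_real_add of_real_mult of_real_1 of_real_minus)
    have c3: "complex_of_real l1 * of_real l2 * of_real l3 = det H"
      by (metis e3 of_real_mult d\<delta>)
    show ?thesis
      apply (rule exI[of _ l1], rule exI[of _ l2], rule exI[of _ l3])
      using d unfolding c1 c2 c3 CH' by (simp add: vec_eq_iff)
  next
    fix a b :: real
    assume ab: "a \<noteq> b" and r1: "2*a+b = 0" and r2: "a^2+2*a*b = -1" and r3: "a^2*b = \<delta>"
    have r3': "complex_of_real (a^2*b) = det H" by (simp add: r3 d\<delta>)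
    have N: "PH H (of_real (a*b)) (of_real (-(a+b))) 1 = 0" by (rule NIL[OF herm CH' r1 r2 r3'])
    define c where "c = \<bar>a\<bar> + \<bar>b\<bar> + 1"
    have ca: "a \<noteq> c" "b \<noteq> c" unfolding c_def by (auto simp: abs_if split: if_splits)
    have N': "PH H (complex_of_real a * complex_of_real b) (-(complex_of_real a + complex_of_real b)) 1 = 0"
      using N by simp
    show ?thesis
      apply (rule exI[of _ a], rule exI[of _ b], rule exI[of _ c])
      using ab ca QUAD[OF N', of "complex_of_real c"] by simp
  qed
  then obtain l1 l2 l3 :: real where dl: "l1\<noteq>l2" "l1\<noteq>l3" "l2\<noteq>l3"
    and cub: "H ** (H ** H) = cmat_scale (of_real l1 + of_real l2 + of_real l3) (H ** H)
       - cmat_scale (of_real l1 * of_real l2 + of_real l1 * of_real l3 + of_real l2 * of_real l3) H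
       + cmat_scale (of_real l1 * of_real l2 * of_real l3) (mat 1)" by blast
  have dl': "complex_of_real l1 \<noteq> of_real l2" "complex_of_real l1 \<noteq> of_real l3" "complex_of_real l2 \<noteq> of_real l3"
    using dl by auto
  obtain P1 P2 P3 where S: "P1 + P2 + P3 = mat 1" and E1: "H ** P1 = cmat_scale (of_real l1) P1"
    and E2: "H ** P2 = cmat_scale (of_real l2) P2" and E3: "H ** P3 = cmat_scale (of_real l3) P3"
    and ex: "\<And>z. mat_exp (cmat_scale z H) = cmat_scale (exp (z * of_real l1)) P1
        + cmat_scale (exp (z * of_real l2)) P2 + cmat_scale (exp (z * of_real l3)) P3"
    using CORE[OF dl' cub] by blast
  have nz: "1 - ?y * complex_of_real l \<noteq> 0" for l
  proof
    assume "1 - ?y * complex_of_real l = 0"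
    then have "Re (1 - ?y * complex_of_real l) = 0" by simp
    then show False by simp
  qed
  define Y where "Y = cmat_scale (1 / (1 - ?y * of_real l1)) P1 + cmat_scale (1 / (1 - ?y * of_real l2)) P2
      + cmat_scale (1 / (1 - ?y * of_real l3)) P3"
  have MP1: "M ** P1 = cmat_scale (1 - ?y * of_real l1) P1" unfolding M_def by (simp add: malg E1 vec_eq_iff algebra_simps)
  have MP2: "M ** P2 = cmat_scale (1 - ?y * of_real l2) P2" unfolding M_def by (simp add: malg E2 vec_eq_iff algebra_simps)
  have MP3: "M ** P3 = cmat_scale (1 - ?y * of_real l3) P3" unfolding M_def by (simp add: malg E3 vec_eq_iff algebra_simps)
  have nz': "\<i> * complex_of_real s * complex_of_real l \<noteq> 1" for l
    using nz[of l] by simp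
  have MY: "M ** Y = mat 1" unfolding Y_def by (simp add: malg MP1 MP2 MP3 nz nz' S)
  have MinvY: "matrix_inv M = Y" using inv_unique[OF MY] by auto
  have mdiv: "-1 / (-1 + w) = 1 / (1 - w)" for w :: complex
  proof -
    have "-1 + w = -(1 - w)" by simp
    then show ?thesis by (simp only: minus_divide_divide)
  qed
  have integ: "\<forall>i j. ((\<lambda>t. complex_of_real (exp (- t))
              * mat_exp (cmat_scale (\<i> * complex_of_real (t * s)) H) $ i $ j)
           has_integral (matrix_inv M) $ i $ j) {0..}"
  proof (intro allI)
    fix i j :: 3
    have I: "((\<lambda>t. P $ i $ j * exp (of_real t * (-1 + ?y * of_real l))) has_integral
             (P $ i $ j * (-1 / (-1 + ?y * of_real l)))) {0..}" for P :: "complex^3^3" and l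
      by (rule has_integral_mult_right, rule exp_int) simp
    have "((\<lambda>t. P1 $ i $ j * exp (of_real t * (-1 + ?y * of_real l1)) + P2 $ i $ j * exp (of_real t * (-1 + ?y * of_real l2))
           + P3 $ i $ j * exp (of_real t * (-1 + ?y * of_real l3))) has_integral
         (P1 $ i $ j * (-1 / (-1 + ?y * of_real l1)) + P2 $ i $ j * (-1 / (-1 + ?y * of_real l2))
           + P3 $ i $ j * (-1 / (-1 + ?y * of_real l3)))) {0..}"
      by (intro has_integral_add I)
    moreover have "(\<lambda>t. P1 $ i $ j * exp (of_real t * (-1 + ?y * of_real l1)) + P2 $ i $ j * exp (of_real t * (-1 + ?y * of_real l2))
           + P3 $ i $ j * exp (of_real t * (-1 + ?y * of_real l3))) =
        (\<lambda>t. complex_of_real (exp (- t)) * mat_exp (cmat_scale (\<i> * complex_of_real (t * s)) H) $ i $ j)"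
      unfolding exp_shift ex by (simp add: algebra_simps)
    moreover have "P1 $ i $ j * (-1 / (-1 + ?y * of_real l1)) + P2 $ i $ j * (-1 / (-1 + ?y * of_real l2))
           + P3 $ i $ j * (-1 / (-1 + ?y * of_real l3)) = (matrix_inv M) $ i $ j"
      unfolding MinvY Y_def mdiv by (simp add: algebra_simps)
    ultimately show "((\<lambda>t. complex_of_real (exp (- t)) * mat_exp (cmat_scale (\<i> * complex_of_real (t * s)) H) $ i $ j)
           has_integral (matrix_inv M) $ i $ j) {0..}" by simp
  qed
  have last': "(mat 1 + cmat_scale ?y H) ** matrix_inv M
        = cmat_scale (1 / D)
            (cmat_scale (1 + complex_of_real (s^2) - \<i> * complex_of_real (s^3) * det H) (mat 1)
             + cmat_scale (2 * \<i> * complex_of_real s) H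
             - cmat_scale (2 * complex_of_real (s^2)) (H ** H))"
    unfolding MinvX by (rule last)
  show ?thesis
    using D0 invM MinvX last' integ unfolding D_def M_def X_def by blast
qed

end
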